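(* Let $\Omega=[a,b)\times[c,d)$ with periodic boundary conditions, $\mathcal{N}_x,\mathcal{N}_y$ positive even integers, $h_x=(b-a)/\mathcal{N}_x$, $h_y=(d-c)/\mathcal{N}_y$, grid points $(x_j,y_k)=(a+jh_x,c+kh_y)$, and grid functions stored as vectors of length $\mathcal{N}_x\mathcal{N}_y$. Let $\mu_x=2\pi/(b-a)$, $\mu_y=2\pi/(d-c)$ and let $\mathbf{D}_2^x$ be the $\mathcal{N}_x\times\mathcal{N}_x$ matrix with $(\mathbf{D}_2^x)_{j,k}=\tfrac12\mu_x^2(-1)^{j+k+1}\csc^2\!\big(\mu_x\tfrac{x_j-x_k}{2}\big)$ for $j\ne k$ and $(\mathbf{D}_2^x)_{j,j}=-\mu_x^2\tfrac{\mathcal{N}_x^2+2}{12}$, and $\mathbf{D}_2^y$ analogously; set $\Delta_h=\mathbf{I}_y\otimes\mathbf{D}_2^x+\mathbf{D}_2^y\otimes\mathbf{I}_x$. Define $\langle u,w\rangle_h=h_xh_y\sum_{j,k}u_{j,k}\bar w_{j,k}$, and let $\cdot$ denote the elementwise product, $|w|^2=w\cdot\bar w$. Let $\varepsilon>0$, $\tau>0$, and let $b_i,a_{ij}$ ($i,j=1,\dots,s$) be real numbers with $b_ia_{ij}+b_ja_{ji}=b_ib_j$ for all $i,j$. Consider the fully discrete scheme: given grid vectors $E^n$ (complex), $N^n,v^n,q^n$ (real), for $i=1,\dots,s$, \[ \begin{aligned} &E_{ni}=E^n+\tau\sum_j a_{ij}k_j^1,\quad k_i^1={\rm i}\big(\Delta_hE_{ni}-\varepsilon^2\Delta_h^2E_{ni}-N_{ni}\cdot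 E_{ni}\big),\\ &N_{ni}=N^n+\tau\sum_j a_{ij}k_j^2,\quad k_i^2=\Delta_hv_{ni},\\ &v_{ni}=v^n+\tau\sum_j a_{ij}k_j^3,\quad k_i^3=N_{ni}-\varepsilon^2\Delta_hN_{ni}+q^n+\tau\sum_j a_{ij}k_j^4,\quad k_i^4=2\,{\rm Re}\big(\bar E_{ni}\cdot k_i^1\big), \end{aligned} \] with update $E^{n+1}=E^n+\tau\sum_ib_ik_i^1$, $N^{n+1}=N^n+\tau\sum_ib_ik_i^2$, $v^{n+1}=v^n+\tau\sum_ib_ik_i^3$, $q^{n+1}=q^n+\tau\sum_ib_ik_i^4$, and initial data $E^0$, $N^0$ the grid values of $E_0,N_0$, $v^0$ the zero-mean solution of $\Delta_hv^0=N_1$ on the grid, and $q^0=|E^0|^2$. Assume the stage equations are solvable at every step. Then for all $n=0,1,\dots,J$: (i) $\langle E^{n+1},E^{n+1}\rangle_h=\langle E^n,E^n\rangle_h$; (ii) $q^n-|E^n|^2=\mathbf{0}$; (iii) $\mathcal{H}_h^{n+1}=\mathcal{H}_h^n$, where \[ \mathcal{H}_h^n=\langle\Delta_hE^n,E^n\rangle_h-\varepsilon^2\langle\Delta_hE^n,\Delta_hE^n\rangle_h-\tfrac12\langle N^n,N^n\rangle_h+\tfrac{\varepsilon^2}{2}\langle\Delta_hN^n,N^n\rangle_h-\langle N^n,|E^n|^2\rangle_h+\tfrac12\langle\Delta_hv^n,v^n\rangle_h. \]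
   Context: This is the Runge–Kutta Fourier pseudo-spectral discretization of the quantum Zakharov system ${\rm i}E_t+\Delta E-\varepsilon^2\Delta^2E=NE$, $N_{tt}-\Delta N+\varepsilon^2\Delta^2N=\Delta|E|^2$, reformulated with $N_t=\Delta v$ and the quadratic auxiliary variable $q=|E|^2$; $\Delta_h$ is the Fourier pseudo-spectral discrete Laplacian. The initial datum $N_1$ satisfies $\int_\Omega N_1=0$. $J$ is the number of time steps. *)

theory Defs
  imports "HOL-Analysis.Analysis"
begin

definition D2 :: "nat \<Rightarrow> real \<Rightarrow> nat \<Rightarrow> nat \<Rightarrow> real" where
  "D2 Nn L j k =
     (let mu = 2 * pi / L; h = L / real Nn in
      if j = k then - (mu ^ 2) * (real Nn ^ 2 + 2) / 12
      else (1/2) * mu ^ 2 * (-1) ^ (j + k + 1)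
             / (sin (mu * ((real j - real k) * h) / 2)) ^ 2)"

text \<open>Grid index set; grid functions are functions on index pairs (j,k).\<close>
definition grid :: "nat \<Rightarrow> nat \<Rightarrow> (nat \<times> nat) set" where
  "grid Nx Ny = {..<Nx} \<times> {..<Ny}"

definition lap :: "real \<Rightarrow> real \<Rightarrow> real \<Rightarrow> real \<Rightarrow> nat \<Rightarrow> nat
      \<Rightarrow> (nat \<times> nat \<Rightarrow> 'f::real_algebra_1) \<Rightarrow> nat \<times> nat \<Rightarrow> 'f" where
  "lap a b c d Nx Ny u p =
     (\<Sum>l<Nx. of_real (D2 Nx (b - a) (fst p) l) * u (l, snd p)) +
     (\<Sum>l<Ny. of_real (D2 Ny (d - c) (snd p) l) * u (fst p, l))"

definition ip :: "real \<Rightarrow> real \<Rightarrow> real \<Rightarrow> real \<Rightarrow> nat \<Rightarrow> nat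
      \<Rightarrow> (nat \<times> nat \<Rightarrow> complex) \<Rightarrow> (nat \<times> nat \<Rightarrow> complex) \<Rightarrow> complex" where
  "ip a b c d Nx Ny u w =
     complex_of_real (((b - a) / real Nx) * ((d - c) / real Ny)) *
     (\<Sum>p\<in>grid Nx Ny. u p * cnj (w p))"

definition cplx :: "(nat \<times> nat \<Rightarrow> real) \<Rightarrow> nat \<times> nat \<Rightarrow> complex" where
  "cplx u = (\<lambda>p. complex_of_real (u p))"

definition Ham :: "real \<Rightarrow> real \<Rightarrow> real \<Rightarrow> real \<Rightarrow> nat \<Rightarrow> nat \<Rightarrow> real
      \<Rightarrow> (nat \<times> nat \<Rightarrow> complex) \<Rightarrow> (nat \<times> nat \<Rightarrow> real) \<Rightarrow> (nat \<times> nat \<Rightarrow> real) \<Rightarrow> complex" where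
  "Ham a b c d Nx Ny \<epsilon> E N v =
     (let L = lap a b c d Nx Ny; IP = ip a b c d Nx Ny in
       IP (L E) E - of_real (\<epsilon>^2) * IP (L E) (L E)
       - (1/2) * IP (cplx N) (cplx N)
       + of_real (\<epsilon>^2 / 2) * IP (L (cplx N)) (cplx N)
       - IP (cplx N) (cplx (\<lambda>p. (cmod (E p))^2))
       + (1/2) * IP (L (cplx v)) (cplx v))"

end

theory Submission
  imports Defs "HOL-Library.Function_Algebras"
begin

instantiation "fun" :: (type, real_vector) real_vector
begin
definition scaleR_fun :: "real \<Rightarrow> ('a \<Rightarrow> 'b) \<Rightarrow> 'a \<Rightarrow> 'b" where
  "scaleR_fun r f = (\<lambda>x. r *\<^sub>R f x)"
instance by standard (auto simp: scaleR_fun_def fun_eq_iff scaleR_add_right scaleR_add_left)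
end

lemma sum_apply_fun: "(sum f A) x = sum (\<lambda>i. f i x) A"
  by (induction A rule: infinite_finite_induct) auto

lemma D2_sym: "D2 n L j k = D2 n L k j"
proof (cases "j = k")
  case False
  have e: "2 * pi / L * ((real k - real j) * (L / real n)) / 2
       = - (2 * pi / L * ((real j - real k) * (L / real n)) / 2)"
  proof -
    have m: "real k - real j = -(real j - real k)" by simp
    show ?thesis by (simp only: m mult_minus_left mult_minus_right minus_divide_left)
  qed
  have "sin (2 * pi / L * ((real k - real j) * (L / real n)) / 2) ^ 2
      = sin (2 * pi / L * ((real j - real k) * (L / real n)) / 2) ^ 2"
    unfolding e sin_minus by simp
  then show ?thesis using False unfolding D2_def Let_def by (simp only: add.commute) simp
qed simp

lemma sym_matrix_sum:
  fixes f g :: "nat \<Rightarrow> 'f::{real_algebra_1,comm_ring_1}"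
  assumes "\<And>j l. M j l = M l j"
  shows "(\<Sum>j\<in>I. (\<Sum>l\<in>I. of_real (M j l) * f l) * g j) = (\<Sum>j\<in>I. f j * (\<Sum>l\<in>I. of_real (M j l) * g l))"
proof -
  have "(\<Sum>j\<in>I. (\<Sum>l\<in>I. of_real (M j l) * f l) * g j) = (\<Sum>j\<in>I. \<Sum>l\<in>I. of_real (M j l) * f l * g j)"
    by (simp add: sum_distrib_right)
  also have "\<dots> = (\<Sum>l\<in>I. \<Sum>j\<in>I. of_real (M j l) * f l * g j)" by (rule sum.swap)
  also have "\<dots> = (\<Sum>l\<in>I. f l * (\<Sum>j\<in>I. of_real (M l j) * g j))"
    by (simp add: sum_distrib_left assms[of _ ] mult_ac)
  finally show ?thesis .
qed

lemma lap_sym: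
  fixes u w :: "nat \<times> nat \<Rightarrow> 'f::{real_algebra_1,comm_ring_1}"
  shows "(\<Sum>p\<in>grid Nx Ny. lap a b c d Nx Ny u p * w p) = (\<Sum>p\<in>grid Nx Ny. u p * lap a b c d Nx Ny w p)"
proof -
  let ?Dx = "D2 Nx (b - a)" and ?Dy = "D2 Ny (d - c)"
  have x: "(\<Sum>p\<in>grid Nx Ny. (\<Sum>l<Nx. of_real (?Dx (fst p) l) * u (l, snd p)) * w p)
      = (\<Sum>p\<in>grid Nx Ny. u p * (\<Sum>l<Nx. of_real (?Dx (fst p) l) * w (l, snd p)))"
  proof -
    have "(\<Sum>p\<in>grid Nx Ny. (\<Sum>l<Nx. of_real (?Dx (fst p) l) * u (l, snd p)) * w p)
        = (\<Sum>j<Nx. \<Sum>k<Ny. (\<Sum>l<Nx. of_real (?Dx j l) * u (l, k)) * w (j,k))"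
      unfolding grid_def by (simp add: sum.cartesian_product case_prod_unfold)
    also have "\<dots> = (\<Sum>k<Ny. \<Sum>j<Nx. (\<Sum>l<Nx. of_real (?Dx j l) * u (l, k)) * w (j,k))"
      by (rule sum.swap)
    also have "\<dots> = (\<Sum>k<Ny. \<Sum>j<Nx. u (j,k) * (\<Sum>l<Nx. of_real (?Dx j l) * w (l, k)))"
      by (rule sum.cong[OF refl], rule sym_matrix_sum[OF D2_sym])
    also have "\<dots> = (\<Sum>j<Nx. \<Sum>k<Ny. u (j,k) * (\<Sum>l<Nx. of_real (?Dx j l) * w (l, k)))"
      by (rule sum.swap)
    also have "\<dots> = (\<Sum>p\<in>grid Nx Ny. u p * (\<Sum>l<Nx. of_real (?Dx (fst p) l) * w (l, snd p)))"
      unfolding grid_def by (simp add: sum.cartesian_product case_prod_unfold)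
    finally show ?thesis .
  qed
  have y: "(\<Sum>p\<in>grid Nx Ny. (\<Sum>l<Ny. of_real (?Dy (snd p) l) * u (fst p, l)) * w p)
      = (\<Sum>p\<in>grid Nx Ny. u p * (\<Sum>l<Ny. of_real (?Dy (snd p) l) * w (fst p, l)))"
  proof -
    have "(\<Sum>p\<in>grid Nx Ny. (\<Sum>l<Ny. of_real (?Dy (snd p) l) * u (fst p, l)) * w p)
        = (\<Sum>j<Nx. \<Sum>k<Ny. (\<Sum>l<Ny. of_real (?Dy k l) * u (j, l)) * w (j,k))"
      unfolding grid_def by (simp add: sum.cartesian_product case_prod_unfold)
    also have "\<dots> = (\<Sum>j<Nx. \<Sum>k<Ny. u (j,k) * (\<Sum>l<Ny. of_real (?Dy k l) * w (j, l)))"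
      by (rule sum.cong[OF refl], rule sym_matrix_sum[OF D2_sym])
    also have "\<dots> = (\<Sum>p\<in>grid Nx Ny. u p * (\<Sum>l<Ny. of_real (?Dy (snd p) l) * w (fst p, l)))"
      unfolding grid_def by (simp add: sum.cartesian_product case_prod_unfold)
    finally show ?thesis .
  qed
  show ?thesis unfolding lap_def using x y
    by (simp add: distrib_left distrib_right sum.distrib)
qed

lemma lap_cnj: "lap a b c d Nx Ny (\<lambda>p. cnj (w p)) p = cnj (lap a b c d Nx Ny w p)"
  unfolding lap_def by simp

lemma lap_sym_cnj:
  "(\<Sum>p\<in>grid Nx Ny. lap a b c d Nx Ny u p * cnj (w p)) = (\<Sum>p\<in>grid Nx Ny. u p * cnj (lap a b c d Nx Ny w p))"
  using lap_sym[of a b c d Nx Ny u "\<lambda>p. cnj (w p)"] by (simp add: lap_cnj)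

lemma lap_cplx: "lap a b c d Nx Ny (cplx u) p = complex_of_real (lap a b c d Nx Ny u p)"
  unfolding lap_def cplx_def by simp

lemma lap_cong: "(\<And>p. p \<in> grid Nx Ny \<Longrightarrow> u p = u' p) \<Longrightarrow> p \<in> grid Nx Ny \<Longrightarrow>
   lap a b c d Nx Ny u p = lap a b c d Nx Ny u' p"
  unfolding lap_def grid_def by (cases p) (auto intro!: sum.cong arg_cong2[where f="(+)"])

lemma lap_add: "lap a b c d Nx Ny (u + w) p = lap a b c d Nx Ny u p + lap a b c d Nx Ny w p"
  unfolding lap_def by (simp add: distrib_left sum.distrib)

lemma of_real_left_commute: "of_real x * (of_real y * z) = of_real y * (of_real x * (z::'f::real_algebra_1))"
  by (simp only: mult.assoc[symmetric] of_real_mult[symmetric] mult.commute)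

lemma lap_scaleR: "lap a b c d Nx Ny (r *\<^sub>R u) p = r *\<^sub>R lap a b c d Nx Ny u p"
  unfolding lap_def scaleR_fun_def
  by (simp add: scaleR_conv_of_real of_real_left_commute distrib_left sum_distrib_left)


lemma rk_quad:
  fixes B :: "'v::real_vector \<Rightarrow> 'v \<Rightarrow> real" and y y' :: 'v and Y k :: "nat \<Rightarrow> 'v"
  assumes add: "\<And>x x' z. B (x + x') z = B x z + B x' z"
    and scl: "\<And>r x z. B (r *\<^sub>R x) z = r * B x z"
    and sym: "\<And>x z. B x z = B z x"
    and symp: "\<And>i j. i \<in> S \<Longrightarrow> j \<in> S \<Longrightarrow> bw i * A i j + bw j * A j i = bw i * bw j"
    and Y: "\<And>i. i \<in> S \<Longrightarrow> Y i = y + \<tau> *\<^sub>R (\<Sum>j\<in>S. A i j *\<^sub>R k j)"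
    and y': "y' = y + \<tau> *\<^sub>R (\<Sum>i\<in>S. bw i *\<^sub>R k i)"
  shows "B y' y' - B y y = 2 * \<tau> * (\<Sum>i\<in>S. bw i * B (Y i) (k i))"
proof -
  have B0: "B 0 z = 0" for z using scl[of 0 z z] by simp
  have Bsum: "B (\<Sum>i\<in>T. f i) z = (\<Sum>i\<in>T. B (f i) z)" for T f z
    by (induction T rule: infinite_finite_induct) (simp_all add: B0 add)
  have Bsum2: "B z (\<Sum>i\<in>T. f i) = (\<Sum>i\<in>T. B z (f i))" for T f z
    using Bsum by (simp add: sym)
  have scl2: "B z (r *\<^sub>R x) = r * B z x" for r x z using scl sym by metis
  have add2: "B z (x + x') = B z x + B z x'" for x x' z using add sym by metis
  define K where "K i j = B (k i) (k j)" for i j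
  have Ks: "K i j = K j i" for i j unfolding K_def using sym by simp
  define s where "s = (\<Sum>i\<in>S. bw i *\<^sub>R k i)"
  have e0: "B y' y' = B y y + \<tau> * B y s + \<tau> * B s y + \<tau> * \<tau> * B s s"
    unfolding y' s_def[symmetric] add add2 scl scl2 by (simp add: sym[of s y] algebra_simps)
  have e1: "B y s = (\<Sum>i\<in>S. bw i * B y (k i))"
    unfolding s_def Bsum2 scl2 ..
  have e2: "B s y = (\<Sum>i\<in>S. bw i * B y (k i))"
    unfolding s_def Bsum scl by (simp only: sym[of _ y])
  have e3: "B s s = (\<Sum>i\<in>S. \<Sum>j\<in>S. bw i * bw j * K i j)"
    unfolding s_def Bsum Bsum2 scl scl2 K_def by (simp only: sum_distrib_left mult.assoc) (intro sum.cong refl arg_cong2[where f="(*)"] sym)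
  have 1: "B y' y' = B y y + 2 * \<tau> * (\<Sum>i\<in>S. bw i * B y (k i))
             + \<tau>^2 * (\<Sum>i\<in>S. \<Sum>j\<in>S. bw i * bw j * K i j)"
    unfolding e0 e1 e2 e3 by (simp add: power2_eq_square)
  have 2: "B (Y i) (k i) = B y (k i) + \<tau> * (\<Sum>j\<in>S. A i j * K j i)" if "i \<in> S" for i
    unfolding Y[OF that] add scl Bsum K_def ..
  have 3: "2 * (\<Sum>i\<in>S. \<Sum>j\<in>S. bw i * A i j * K j i) = (\<Sum>i\<in>S. \<Sum>j\<in>S. bw i * bw j * K i j)"
  proof -
    have sw: "(\<Sum>i\<in>S. \<Sum>j\<in>S. bw i * A i j * K j i) = (\<Sum>i\<in>S. \<Sum>j\<in>S. bw j * A j i * K i j)"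
      by (rule sum.swap)
    have h1: "(\<Sum>i\<in>S. \<Sum>j\<in>S. bw i * A i j * K j i) = (\<Sum>i\<in>S. \<Sum>j\<in>S. bw i * A i j * K i j)"
      by (intro sum.cong refl arg_cong2[where f="(*)"] Ks)
    have "2 * (\<Sum>i\<in>S. \<Sum>j\<in>S. bw i * A i j * K j i)
        = (\<Sum>i\<in>S. \<Sum>j\<in>S. bw i * A i j * K i j) + (\<Sum>i\<in>S. \<Sum>j\<in>S. bw j * A j i * K i j)"
      using h1 sw by simp
    also have "\<dots> = (\<Sum>i\<in>S. \<Sum>j\<in>S. (bw i * A i j + bw j * A j i) * K i j)"
      by (simp only: sum.distrib[symmetric] distrib_right)
    also have "\<dots> = (\<Sum>i\<in>S. \<Sum>j\<in>S. bw i * bw j * K i j)"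
      by (intro sum.cong refl) (simp add: symp)
    finally show ?thesis .
  qed
  have "2 * \<tau> * (\<Sum>i\<in>S. bw i * B (Y i) (k i))
      = 2 * \<tau> * (\<Sum>i\<in>S. bw i * B y (k i)) + \<tau>^2 * (2 * (\<Sum>i\<in>S. \<Sum>j\<in>S. bw i * A i j * K j i))"
    by (simp add: 2 sum.distrib distrib_left sum_distrib_left power2_eq_square mult_ac cong: sum.cong)
  then show ?thesis unfolding 1 3 by simp
qed

lemma Re_mult_cnj_self: "Re (z * cnj z) = (cmod z)^2"
  unfolding cmod_power2 by (simp add: power2_eq_square)

lemma pw_identity:
  fixes g x :: complex and m :: real
  shows "Re (g * cnj (\<i> * (g - of_real m * x))) - 1/2 * m * (2 * Re (cnj x * (\<i> * (g - of_real m * x)))) = 0"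
  by (simp add: algebra_simps)

definition restr :: "(nat \<times> nat) set \<Rightarrow> (nat \<times> nat \<Rightarrow> 'f::zero) \<Rightarrow> nat \<times> nat \<Rightarrow> 'f" where
  "restr G u = (\<lambda>p. if p \<in> G then u p else 0)"

lemma lap_restr: "p \<in> grid Nx Ny \<Longrightarrow> lap a b c d Nx Ny (restr (grid Nx Ny) u) p = lap a b c d Nx Ny u p"
  by (rule lap_cong) (simp_all add: restr_def)

lemma lap_lap_restr: "p \<in> grid Nx Ny \<Longrightarrow>
   lap a b c d Nx Ny (lap a b c d Nx Ny (restr (grid Nx Ny) u)) p = lap a b c d Nx Ny (lap a b c d Nx Ny u) p"
  by (rule lap_cong) (simp_all add: lap_restr)

lemma Im_zero_of_cnj: assumes "z = cnj z" shows "Im z = 0"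
proof -
  have "Im z = Im (cnj z)" using assms by (rule arg_cong)
  then show ?thesis by simp
qed

lemma Im_sum_lap_cnj: "Im (\<Sum>p\<in>grid Nx Ny. lap a b c d Nx Ny X p * cnj (X p)) = 0"
proof -
  let ?z = "\<Sum>p\<in>grid Nx Ny. lap a b c d Nx Ny X p * cnj (X p)"
  have "?z = (\<Sum>p\<in>grid Nx Ny. X p * cnj (lap a b c d Nx Ny X p))" by (rule lap_sym_cnj)
  also have "\<dots> = cnj ?z" by (simp add: mult.commute)
  finally show ?thesis by (rule Im_zero_of_cnj)
qed

lemma mass_term:
  assumes K: "\<And>p. p \<in> grid Nx Ny \<Longrightarrow> K p = \<i> * (lap a b c d Nx Ny X p
      - of_real (\<epsilon>^2) * lap a b c d Nx Ny (lap a b c d Nx Ny X) p - of_real (M p) * X p)"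
  shows "(\<Sum>p\<in>grid Nx Ny. Re (X p * cnj (K p))) = 0"
proof -
  let ?G = "grid Nx Ny" and ?L = "lap a b c d Nx Ny"
  have "(\<Sum>p\<in>?G. Re (X p * cnj (K p))) = (\<Sum>p\<in>?G. Im (X p * cnj (?L X p))
       - \<epsilon>^2 * Im (X p * cnj (?L (?L X) p)))"
    by (intro sum.cong refl) (simp add: K algebra_simps)
  also have "\<dots> = Im (\<Sum>p\<in>?G. X p * cnj (?L X p)) - \<epsilon>^2 * Im (\<Sum>p\<in>?G. X p * cnj (?L (?L X) p))"
    by (simp only: sum_subtractf sum_distrib_left Im_sum)
  also have "Im (\<Sum>p\<in>?G. X p * cnj (?L X p)) = 0"
    using Im_sum_lap_cnj[of a b c d Nx Ny X] by (simp only: lap_sym_cnj)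
  also have "Im (\<Sum>p\<in>?G. X p * cnj (?L (?L X) p)) = Im (\<Sum>p\<in>?G. ?L X p * cnj (?L X p))"
    by (simp only: lap_sym_cnj)
  also have "\<dots> = 0" by simp
  finally show ?thesis by simp
qed

definition cB :: "nat \<Rightarrow> nat \<Rightarrow> (nat \<times> nat \<Rightarrow> complex) \<Rightarrow> (nat \<times> nat \<Rightarrow> complex) \<Rightarrow> real" where
  "cB Nx Ny u w = Re (\<Sum>p\<in>grid Nx Ny. u p * cnj (w p))"

definition rB :: "nat \<Rightarrow> nat \<Rightarrow> (nat \<times> nat \<Rightarrow> real) \<Rightarrow> (nat \<times> nat \<Rightarrow> real) \<Rightarrow> real" where
  "rB Nx Ny u w = (\<Sum>p\<in>grid Nx Ny. u p * w p)"

lemma cB_add: "cB Nx Ny (u + u') w = cB Nx Ny u w + cB Nx Ny u' w"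
  unfolding cB_def by (simp add: distrib_right sum.distrib)
lemma cB_add2: "cB Nx Ny w (u + u') = cB Nx Ny w u + cB Nx Ny w u'"
  unfolding cB_def by (simp add: distrib_left sum.distrib)
lemma cB_scl: "cB Nx Ny (r *\<^sub>R u) w = r * cB Nx Ny u w"
  unfolding cB_def scaleR_fun_def
  by (simp add: scaleR_conv_of_real mult.assoc sum_distrib_left[symmetric])
lemma cB_scl2: "cB Nx Ny w (r *\<^sub>R u) = r * cB Nx Ny w u"
  unfolding cB_def scaleR_fun_def
  by (simp add: scaleR_conv_of_real mult.left_commute sum_distrib_left[symmetric])
lemma cB_sym: "cB Nx Ny u w = cB Nx Ny w u"
  unfolding cB_def Re_sum by (intro sum.cong refl) (simp add: algebra_simps)
lemma cB_lap: "cB Nx Ny (lap a b c d Nx Ny u) w = cB Nx Ny u (lap a b c d Nx Ny w)"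
  unfolding cB_def by (simp only: lap_sym_cnj)
lemma cB_cong: "(\<And>p. p \<in> grid Nx Ny \<Longrightarrow> u p = u' p) \<Longrightarrow> (\<And>p. p \<in> grid Nx Ny \<Longrightarrow> w p = w' p) \<Longrightarrow>
   cB Nx Ny u w = cB Nx Ny u' w'"
  unfolding cB_def by (simp cong: sum.cong)

lemma rB_add: "rB Nx Ny (u + u') w = rB Nx Ny u w + rB Nx Ny u' w"
  unfolding rB_def by (simp add: distrib_right sum.distrib)
lemma rB_add2: "rB Nx Ny w (u + u') = rB Nx Ny w u + rB Nx Ny w u'"
  unfolding rB_def by (simp add: distrib_left sum.distrib)
lemma rB_scl: "rB Nx Ny (r *\<^sub>R u) w = r * rB Nx Ny u w"
  unfolding rB_def scaleR_fun_def by (simp add: mult.assoc sum_distrib_left)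
lemma rB_scl2: "rB Nx Ny w (r *\<^sub>R u) = r * rB Nx Ny w u"
  unfolding rB_def scaleR_fun_def by (simp add: mult.left_commute sum_distrib_left)
lemma rB_sym: "rB Nx Ny u w = rB Nx Ny w u"
  unfolding rB_def by (simp add: mult.commute)
lemma rB_lap: "rB Nx Ny (lap a b c d Nx Ny u) w = rB Nx Ny u (lap a b c d Nx Ny w)"
  unfolding rB_def by (rule lap_sym)
lemma rB_cong: "(\<And>p. p \<in> grid Nx Ny \<Longrightarrow> u p = u' p) \<Longrightarrow> (\<And>p. p \<in> grid Nx Ny \<Longrightarrow> w p = w' p) \<Longrightarrow>
   rB Nx Ny u w = rB Nx Ny u' w'"
  unfolding rB_def by (simp cong: sum.cong)

lemma lapF_add: "lap a b c d Nx Ny (u + u') = lap a b c d Nx Ny u + lap a b c d Nx Ny u'"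
  by (rule ext) (simp add: lap_add)
lemma lapF_scl: "lap a b c d Nx Ny (r *\<^sub>R u) = r *\<^sub>R lap a b c d Nx Ny u"
  by (rule ext) (simp only: lap_scaleR, simp add: scaleR_fun_def)

type_synonym st = "(nat \<times> nat \<Rightarrow> complex) \<times> (nat \<times> nat \<Rightarrow> real) \<times> (nat \<times> nat \<Rightarrow> real) \<times> (nat \<times> nat \<Rightarrow> real)"

definition BB :: "real \<Rightarrow> real \<Rightarrow> real \<Rightarrow> real \<Rightarrow> nat \<Rightarrow> nat \<Rightarrow> real \<Rightarrow> st \<Rightarrow> st \<Rightarrow> real" where
  "BB a b c d Nx Ny \<epsilon> x y = (case x of (E1, N1, v1, q1) \<Rightarrow> case y of (E2, N2, v2, q2) \<Rightarrow>
      cB Nx Ny (lap a b c d Nx Ny E1) E2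
    - \<epsilon>^2 * cB Nx Ny (lap a b c d Nx Ny E1) (lap a b c d Nx Ny E2)
    - 1/2 * rB Nx Ny N1 N2
    + \<epsilon>^2/2 * rB Nx Ny (lap a b c d Nx Ny N1) N2
    - 1/2 * (rB Nx Ny N1 q2 + rB Nx Ny N2 q1)
    + 1/2 * rB Nx Ny (lap a b c d Nx Ny v1) v2)"

lemma BB_add: "BB a b c d Nx Ny \<epsilon> (x + x') z = BB a b c d Nx Ny \<epsilon> x z + BB a b c d Nx Ny \<epsilon> x' z"
  by (cases x; cases x'; cases z)
     (simp add: BB_def lapF_add cB_add rB_add rB_add2 algebra_simps add_divide_distrib)

lemma BB_scl: "BB a b c d Nx Ny \<epsilon> (r *\<^sub>R x) z = r * BB a b c d Nx Ny \<epsilon> x z"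
  by (cases x; cases z)
     (simp add: BB_def lapF_scl cB_scl rB_scl rB_scl2 algebra_simps)

lemma BB_sym: "BB a b c d Nx Ny \<epsilon> x z = BB a b c d Nx Ny \<epsilon> z x"
proof -
  obtain E1 N1 v1 q1 where x: "x = (E1, N1, v1, q1)" by (cases x) auto
  obtain E2 N2 v2 q2 where z: "z = (E2, N2, v2, q2)" by (cases z) auto
  let ?L = "lap a b c d Nx Ny"
  have 1: "cB Nx Ny (?L E1) E2 = cB Nx Ny (?L E2) E1"
    by (simp only: cB_lap cB_sym[of _ _ E1])
  have 2: "cB Nx Ny (?L E1) (?L E2) = cB Nx Ny (?L E2) (?L E1)" by (rule cB_sym)
  have 3: "rB Nx Ny (?L N1) N2 = rB Nx Ny (?L N2) N1"
    by (simp only: rB_lap rB_sym[of _ _ N1])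
  have 4: "rB Nx Ny (?L v1) v2 = rB Nx Ny (?L v2) v1"
    by (simp only: rB_lap rB_sym[of _ _ v1])
  have 5: "rB Nx Ny N1 N2 = rB Nx Ny N2 N1" by (rule rB_sym)
  show ?thesis unfolding x z BB_def prod.case 1 2 3 4 5 by simp
qed

lemma BB_restr:
  "BB a b c d Nx Ny \<epsilon> (restr (grid Nx Ny) E1, restr (grid Nx Ny) N1, restr (grid Nx Ny) v1, restr (grid Nx Ny) q1)
      (restr (grid Nx Ny) E2, restr (grid Nx Ny) N2, restr (grid Nx Ny) v2, restr (grid Nx Ny) q2)
   = BB a b c d Nx Ny \<epsilon> (E1, N1, v1, q1) (E2, N2, v2, q2)"
proof -
  have r: "p \<in> grid Nx Ny \<Longrightarrow> restr (grid Nx Ny) u p = u p" for p and u :: "nat \<times> nat \<Rightarrow> 'f::zero"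
    by (simp add: restr_def)
  show ?thesis unfolding BB_def prod.case
    by (simp only: cB_cong[OF lap_restr r] cB_cong[OF lap_restr lap_restr]
         rB_cong[OF r r] rB_cong[OF lap_restr r])
qed

lemma BB_stage:
  assumes K1: "\<And>p. p \<in> grid Nx Ny \<Longrightarrow> K1 p = \<i> * (lap a b c d Nx Ny X p
      - of_real (\<epsilon>^2) * lap a b c d Nx Ny (lap a b c d Nx Ny X) p - of_real (M p) * X p)"
    and K2: "\<And>p. p \<in> grid Nx Ny \<Longrightarrow> K2 p = lap a b c d Nx Ny V p"
    and K3: "\<And>p. p \<in> grid Nx Ny \<Longrightarrow> K3 p = M p - \<epsilon>^2 * lap a b c d Nx Ny M p + Q p"
    and K4: "\<And>p. p \<in> grid Nx Ny \<Longrightarrow> K4 p = 2 * Re (cnj (X p) * K1 p)"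
  shows "BB a b c d Nx Ny \<epsilon> (X, M, V, Q) (K1, K2, K3, K4) = 0"
proof -
  let ?G = "grid Nx Ny" and ?L = "lap a b c d Nx Ny"
  define f1 where "f1 p = Re (?L X p * cnj (K1 p))" for p
  define f2 where "f2 p = Re (?L (?L X) p * cnj (K1 p))" for p
  have s: "cB Nx Ny (?L X) (?L K1) = cB Nx Ny (?L (?L X)) K1"
    by (simp only: cB_lap)
  have c1: "cB Nx Ny (?L X) K1 = (\<Sum>p\<in>?G. f1 p)" unfolding cB_def f1_def by simp
  have c2: "cB Nx Ny (?L (?L X)) K1 = (\<Sum>p\<in>?G. f2 p)" unfolding cB_def f2_def by simp
  have "BB a b c d Nx Ny \<epsilon> (X, M, V, Q) (K1, K2, K3, K4)
     = (\<Sum>p\<in>?G. f1 p - \<epsilon>^2 * f2 p - 1/2 * (M p * K2 p) + \<epsilon>^2/2 * (?L M p * K2 p)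
          - 1/2 * (M p * K4 p + K2 p * Q p) + 1/2 * (?L V p * K3 p))"
    unfolding BB_def prod.case s c1 c2 rB_def
    by (simp only: sum.distrib sum_subtractf sum_distrib_left distrib_left)
  also have "\<dots> = 0"
  proof (intro sum.neutral ballI)
    fix p assume p: "p \<in> ?G"
    let ?g = "?L X p - of_real (\<epsilon>^2) * ?L (?L X) p"
    have "f1 p - \<epsilon>^2 * f2 p = Re (?g * cnj (K1 p))"
      unfolding f1_def f2_def by (simp add: algebra_simps)
    moreover have "K1 p = \<i> * (?g - of_real (M p) * X p)" using K1[OF p] by simp
    ultimately have h1: "f1 p - \<epsilon>^2 * f2 p - 1/2 * (M p * K4 p) = 0"
      using pw_identity[of ?g "M p" "X p"] K4[OF p] by simp
    have h2: "- 1/2 * (M p * K2 p) + \<epsilon>^2/2 * (?L M p * K2 p) - 1/2 * (K2 p * Q p) + 1/2 * (?L V p * K3 p) = 0"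
      unfolding K2[OF p] K3[OF p] by (simp add: algebra_simps)
    show "f1 p - \<epsilon>^2 * f2 p - 1/2 * (M p * K2 p) + \<epsilon>^2/2 * (?L M p * K2 p)
          - 1/2 * (M p * K4 p + K2 p * Q p) + 1/2 * (?L V p * K3 p) = 0"
      using h1 h2 by (simp only: distrib_left; linarith)
  qed
  finally show ?thesis .
qed

lemma Ham_BB:
  assumes q: "\<And>p. p \<in> grid Nx Ny \<Longrightarrow> q p = (cmod (E p))^2"
  shows "Ham a b c d Nx Ny \<epsilon> E N v = complex_of_real (((b - a) / real Nx) * ((d - c) / real Ny) * BB a b c d Nx Ny \<epsilon> (E, N, v, q) (E, N, v, q))"
proof -
  let ?G = "grid Nx Ny" and ?L = "lap a b c d Nx Ny"
  define w where "w = ((b - a) / real Nx) * ((d - c) / real Ny)"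
  let ?IP = "ip a b c d Nx Ny"
  have r: "z = complex_of_real (Re z)" if "Im z = 0" for z using that by (simp add: complex_eq_iff)
  have i1: "?IP (?L E) E = of_real w * of_real (cB Nx Ny (?L E) E)"
    unfolding ip_def cB_def w_def using r[OF Im_sum_lap_cnj[of a b c d Nx Ny E]] by simp
  have i2: "?IP (?L E) (?L E) = of_real w * of_real (cB Nx Ny (?L E) (?L E))"
    unfolding ip_def cB_def w_def using r[of "\<Sum>p\<in>?G. ?L E p * cnj (?L E p)"] by simp
  have i3: "?IP (cplx N) (cplx N) = of_real w * of_real (rB Nx Ny N N)"
    unfolding ip_def cplx_def rB_def w_def by simp
  have i4: "?IP (?L (cplx N)) (cplx N) = of_real w * of_real (rB Nx Ny (?L N) N)"
    unfolding ip_def rB_def w_def using lap_cplx[of a b c d Nx Ny N] unfolding cplx_def by simp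
  have i5: "?IP (cplx N) (cplx (\<lambda>p. (cmod (E p))^2)) = of_real w * of_real (rB Nx Ny N q)"
    unfolding ip_def cplx_def rB_def w_def by (simp add: q cong: sum.cong)
  have i6: "?IP (?L (cplx v)) (cplx v) = of_real w * of_real (rB Nx Ny (?L v) v)"
    unfolding ip_def rB_def w_def using lap_cplx[of a b c d Nx Ny v] unfolding cplx_def by simp
  show ?thesis
    unfolding Ham_def Let_def i1 i2 i3 i4 i5 i6 BB_def prod.case w_def[symmetric]
    by (simp add: algebra_simps)
qed


lemma ip_self: "ip a b c d Nx Ny u u = complex_of_real (((b - a) / real Nx) * ((d - c) / real Ny) * (\<Sum>p\<in>grid Nx Ny. (cmod (u p))^2))"
  unfolding ip_def by (simp add: complex_mult_cnj cmod_power2)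

lemma sum_Pair: "(\<Sum>j\<in>S. (f j, g j)) = (\<Sum>j\<in>S. f j, \<Sum>j\<in>S. g j)"
  by (simp add: prod_eq_iff fst_sum snd_sum)

lemma tuple_comb:
  "(x1, x2, x3, x4) + r *\<^sub>R (\<Sum>j\<in>S. c j *\<^sub>R (f1 j, f2 j, f3 j, f4 j))
   = (x1 + r *\<^sub>R (\<Sum>j\<in>S. c j *\<^sub>R f1 j), x2 + r *\<^sub>R (\<Sum>j\<in>S. c j *\<^sub>R f2 j),
      x3 + r *\<^sub>R (\<Sum>j\<in>S. c j *\<^sub>R f3 j), x4 + r *\<^sub>R (\<Sum>j\<in>S. c j *\<^sub>R f4 j))"
  by (simp add: sum_Pair)

lemma restr_comb:
  fixes U X :: "nat \<times> nat \<Rightarrow> 'f::real_vector"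
  assumes "\<And>p. p \<in> G \<Longrightarrow> U p = X p + r *\<^sub>R (\<Sum>j\<in>S. c j *\<^sub>R F j p)"
  shows "restr G U = restr G X + r *\<^sub>R (\<Sum>j\<in>S. c j *\<^sub>R restr G (F j))"
  by (rule ext) (simp add: restr_def assms scaleR_fun_def sum_apply_fun)

theorem theorem3p3:
  fixes a b c d \<epsilon> \<tau> :: real
    and Nx Ny s J :: nat
    and A :: "nat \<Rightarrow> nat \<Rightarrow> real" and bw :: "nat \<Rightarrow> real"
    and E0 :: "real \<times> real \<Rightarrow> complex" and N0 N1 :: "real \<times> real \<Rightarrow> real"
    and E :: "nat \<Rightarrow> nat \<times> nat \<Rightarrow> complex"
    and N v q :: "nat \<Rightarrow> nat \<times> nat \<Rightarrow> real"
    and Es K1 :: "nat \<Rightarrow> nat \<Rightarrow> nat \<times> nat \<Rightarrow> complex"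
    and Ns Vs K2 K3 K4 :: "nat \<Rightarrow> nat \<Rightarrow> nat \<times> nat \<Rightarrow> real"
  assumes ab: "a < b" and cd: "c < d"
    and Nx: "Nx > 0" "even Nx" and Ny: "Ny > 0" "even Ny"
    and eps: "\<epsilon> > 0" and tau: "\<tau> > 0"
    and symp: "\<And>i j. i \<in> {1..s} \<Longrightarrow> j \<in> {1..s} \<Longrightarrow>
                 bw i * A i j + bw j * A j i = bw i * bw j"
    and N1_mean: "integral (cbox (a, c) (b, d)) N1 = 0"
    and init_E: "\<And>j k. j < Nx \<Longrightarrow> k < Ny \<Longrightarrow>
                   E 0 (j, k) = E0 (a + real j * ((b - a) / real Nx), c + real k * ((d - c) / real Ny))"
    and init_N: "\<And>j k. j < Nx \<Longrightarrow> k < Ny \<Longrightarrow>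
                   N 0 (j, k) = N0 (a + real j * ((b - a) / real Nx), c + real k * ((d - c) / real Ny))"
    and init_v: "\<And>j k. j < Nx \<Longrightarrow> k < Ny \<Longrightarrow>
                   lap a b c d Nx Ny (v 0) (j, k) = N1 (a + real j * ((b - a) / real Nx), c + real k * ((d - c) / real Ny))"
    and init_v_mean: "(\<Sum>p\<in>grid Nx Ny. v 0 p) = 0"
    and init_q: "\<And>p. p \<in> grid Nx Ny \<Longrightarrow> q 0 p = (cmod (E 0 p))^2"
    and stE: "\<And>n i p. n \<le> J \<Longrightarrow> i \<in> {1..s} \<Longrightarrow> p \<in> grid Nx Ny \<Longrightarrow>
        Es n i p = E n p + of_real \<tau> * (\<Sum>j\<in>{1..s}. of_real (A i j) * K1 n j p)"
    and stK1: "\<And>n i p. n \<le> J \<Longrightarrow> i \<in> {1..s} \<Longrightarrow> p \<in> grid Nx Ny \<Longrightarrow>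
        K1 n i p = \<i> * (lap a b c d Nx Ny (Es n i) p
                         - of_real (\<epsilon>^2) * lap a b c d Nx Ny (lap a b c d Nx Ny (Es n i)) p
                         - of_real (Ns n i p) * Es n i p)"
    and stN: "\<And>n i p. n \<le> J \<Longrightarrow> i \<in> {1..s} \<Longrightarrow> p \<in> grid Nx Ny \<Longrightarrow>
        Ns n i p = N n p + \<tau> * (\<Sum>j\<in>{1..s}. A i j * K2 n j p)"
    and stK2: "\<And>n i p. n \<le> J \<Longrightarrow> i \<in> {1..s} \<Longrightarrow> p \<in> grid Nx Ny \<Longrightarrow>
        K2 n i p = lap a b c d Nx Ny (Vs n i) p"
    and stV: "\<And>n i p. n \<le> J \<Longrightarrow> i \<in> {1..s} \<Longrightarrow> p \<in> grid Nx Ny \<Longrightarrow>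
        Vs n i p = v n p + \<tau> * (\<Sum>j\<in>{1..s}. A i j * K3 n j p)"
    and stK3: "\<And>n i p. n \<le> J \<Longrightarrow> i \<in> {1..s} \<Longrightarrow> p \<in> grid Nx Ny \<Longrightarrow>
        K3 n i p = Ns n i p - \<epsilon>^2 * lap a b c d Nx Ny (Ns n i) p + q n p
                   + \<tau> * (\<Sum>j\<in>{1..s}. A i j * K4 n j p)"
    and stK4: "\<And>n i p. n \<le> J \<Longrightarrow> i \<in> {1..s} \<Longrightarrow> p \<in> grid Nx Ny \<Longrightarrow>
        K4 n i p = 2 * Re (cnj (Es n i p) * K1 n i p)"
    and updE: "\<And>n p. n \<le> J \<Longrightarrow> p \<in> grid Nx Ny \<Longrightarrow>
        E (Suc n) p = E n p + of_real \<tau> * (\<Sum>i\<in>{1..s}. of_real (bw i) * K1 n i p)"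
    and updN: "\<And>n p. n \<le> J \<Longrightarrow> p \<in> grid Nx Ny \<Longrightarrow>
        N (Suc n) p = N n p + \<tau> * (\<Sum>i\<in>{1..s}. bw i * K2 n i p)"
    and updV: "\<And>n p. n \<le> J \<Longrightarrow> p \<in> grid Nx Ny \<Longrightarrow>
        v (Suc n) p = v n p + \<tau> * (\<Sum>i\<in>{1..s}. bw i * K3 n i p)"
    and updQ: "\<And>n p. n \<le> J \<Longrightarrow> p \<in> grid Nx Ny \<Longrightarrow>
        q (Suc n) p = q n p + \<tau> * (\<Sum>i\<in>{1..s}. bw i * K4 n i p)"
  shows "\<forall>n \<le> J.
           ip a b c d Nx Ny (E (Suc n)) (E (Suc n)) = ip a b c d Nx Ny (E n) (E n)
         \<and> (\<forall>p\<in>grid Nx Ny. q n p - (cmod (E n p))^2 = 0)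
         \<and> Ham a b c d Nx Ny \<epsilon> (E (Suc n)) (N (Suc n)) (v (Suc n))
             = Ham a b c d Nx Ny \<epsilon> (E n) (N n) (v n)"
  proof -
  let ?G = "grid Nx Ny" and ?L = "lap a b c d Nx Ny" and ?S = "{1..s}"
  have step_pw: "(cmod (E (Suc n) p))^2 - (cmod (E n p))^2
      = 2 * \<tau> * (\<Sum>i\<in>?S. bw i * Re (Es n i p * cnj (K1 n i p)))"
    if n: "n \<le> J" and p: "p \<in> ?G" for n p
  proof -
    have "Re (E (Suc n) p * cnj (E (Suc n) p)) - Re (E n p * cnj (E n p))
        = 2 * \<tau> * (\<Sum>i\<in>?S. bw i * Re (Es n i p * cnj (K1 n i p)))"
    proof (rule rk_quad[where B="\<lambda>x z. Re (x * cnj z)" and A=A and k="\<lambda>i. K1 n i p"])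
      show "Re ((x + x') * cnj z) = Re (x * cnj z) + Re (x' * cnj z)" for x x' z
        by (simp add: algebra_simps)
      show "Re ((r *\<^sub>R x) * cnj z) = r * Re (x * cnj z)" for r x z
        by (simp add: scaleR_conv_of_real algebra_simps)
      show "Re (x * cnj z) = Re (z * cnj x)" for x z by (simp add: algebra_simps)
      show "bw i * A i j + bw j * A j i = bw i * bw j" if "i \<in> ?S" "j \<in> ?S" for i j
        using symp that by blast
      show "Es n i p = E n p + \<tau> *\<^sub>R (\<Sum>j\<in>?S. A i j *\<^sub>R K1 n j p)" if "i \<in> ?S" for i
        using stE[OF n that p] by (simp add: scaleR_conv_of_real)
      show "E (Suc n) p = E n p + \<tau> *\<^sub>R (\<Sum>i\<in>?S. bw i *\<^sub>R K1 n i p)"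
        using updE[OF n p] by (simp add: scaleR_conv_of_real)
    qed
    then show ?thesis by (simp only: Re_mult_cnj_self)
  qed
  have qinv: "\<forall>p\<in>?G. q n p = (cmod (E n p))^2" if "n \<le> Suc J" for n
    using that
  proof (induction n)
    case 0
    then show ?case using init_q by blast
  next
    case (Suc n)
    then have n: "n \<le> J" by simp
    have IH: "\<forall>p\<in>?G. q n p = (cmod (E n p))^2" using Suc by simp
    show ?case
    proof
      fix p assume p: "p \<in> ?G"
      have k4: "(\<Sum>i\<in>?S. bw i * K4 n i p) = 2 * (\<Sum>i\<in>?S. bw i * Re (Es n i p * cnj (K1 n i p)))"
        unfolding sum_distrib_left
        by (intro sum.cong refl) (simp add: stK4[OF n _ p] algebra_simps)
      show "q (Suc n) p = (cmod (E (Suc n) p))^2"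
        using updQ[OF n p] step_pw[OF n p] IH p k4 by simp
    qed
  qed
  have mass: "ip a b c d Nx Ny (E (Suc n)) (E (Suc n)) = ip a b c d Nx Ny (E n) (E n)"
    if n: "n \<le> J" for n
  proof -
    have "(\<Sum>p\<in>?G. (cmod (E (Suc n) p))^2) - (\<Sum>p\<in>?G. (cmod (E n p))^2)
        = (\<Sum>p\<in>?G. 2 * \<tau> * (\<Sum>i\<in>?S. bw i * Re (Es n i p * cnj (K1 n i p))))"
      by (simp only: sum_subtractf[symmetric] step_pw[OF n] cong: sum.cong)
    also have "\<dots> = 2 * \<tau> * (\<Sum>i\<in>?S. bw i * (\<Sum>p\<in>?G. Re (Es n i p * cnj (K1 n i p))))"
      by (simp add: sum_distrib_left sum.swap[of _ ?G] mult_ac)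
    also have "\<dots> = 0"
    proof -
      have "(\<Sum>p\<in>?G. Re (Es n i p * cnj (K1 n i p))) = 0" if i: "i \<in> ?S" for i
        by (rule mass_term[where \<epsilon>=\<epsilon> and M="Ns n i"]) (rule stK1[OF n i])
      then show ?thesis by simp
    qed
    finally show ?thesis unfolding ip_self by simp
  qed
  have energy: "Ham a b c d Nx Ny \<epsilon> (E (Suc n)) (N (Suc n)) (v (Suc n))
             = Ham a b c d Nx Ny \<epsilon> (E n) (N n) (v n)"
    if n: "n \<le> J" for n
  proof -
    let ?R = "restr ?G"
    let ?B = "BB a b c d Nx Ny \<epsilon>"
    define Qs where "Qs i = (\<lambda>p. q n p + \<tau> * (\<Sum>j\<in>?S. A i j * K4 n j p))" for i
    define y where "y = (?R (E n), ?R (N n), ?R (v n), ?R (q n))"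
    define y' where "y' = (?R (E (Suc n)), ?R (N (Suc n)), ?R (v (Suc n)), ?R (q (Suc n)))"
    define Y where "Y i = (?R (Es n i), ?R (Ns n i), ?R (Vs n i), ?R (Qs i))" for i
    define k where "k i = (?R (K1 n i), ?R (K2 n i), ?R (K3 n i), ?R (K4 n i))" for i
    have "?B y' y' - ?B y y = 2 * \<tau> * (\<Sum>i\<in>?S. bw i * ?B (Y i) (k i))"
    proof (rule rk_quad[where B="?B" and A=A])
      show "?B (x + x') z = ?B x z + ?B x' z" for x x' z by (rule BB_add)
      show "?B (r *\<^sub>R x) z = r * ?B x z" for r x z by (rule BB_scl)
      show "?B x z = ?B z x" for x z by (rule BB_sym)
      show "bw i * A i j + bw j * A j i = bw i * bw j" if "i \<in> ?S" "j \<in> ?S" for i j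
        using symp that by blast
      show "Y i = y + \<tau> *\<^sub>R (\<Sum>j\<in>?S. A i j *\<^sub>R k j)" if i: "i \<in> ?S" for i
        unfolding Y_def y_def k_def tuple_comb
      proof (intro prod_eqI; simp only: fst_conv snd_conv)
        show "?R (Es n i) = ?R (E n) + \<tau> *\<^sub>R (\<Sum>j\<in>?S. A i j *\<^sub>R ?R (K1 n j))"
          by (rule restr_comb) (simp add: stE[OF n i] scaleR_conv_of_real)
        show "?R (Ns n i) = ?R (N n) + \<tau> *\<^sub>R (\<Sum>j\<in>?S. A i j *\<^sub>R ?R (K2 n j))"
          by (rule restr_comb) (simp add: stN[OF n i])
        show "?R (Vs n i) = ?R (v n) + \<tau> *\<^sub>R (\<Sum>j\<in>?S. A i j *\<^sub>R ?R (K3 n j))"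
          by (rule restr_comb) (simp add: stV[OF n i])
        show "?R (Qs i) = ?R (q n) + \<tau> *\<^sub>R (\<Sum>j\<in>?S. A i j *\<^sub>R ?R (K4 n j))"
          by (rule restr_comb) (simp add: Qs_def)
      qed
      show "y' = y + \<tau> *\<^sub>R (\<Sum>i\<in>?S. bw i *\<^sub>R k i)"
        unfolding y'_def y_def k_def tuple_comb
      proof (intro prod_eqI; simp only: fst_conv snd_conv)
        show "?R (E (Suc n)) = ?R (E n) + \<tau> *\<^sub>R (\<Sum>j\<in>?S. bw j *\<^sub>R ?R (K1 n j))"
          by (rule restr_comb) (simp add: updE[OF n] scaleR_conv_of_real)
        show "?R (N (Suc n)) = ?R (N n) + \<tau> *\<^sub>R (\<Sum>j\<in>?S. bw j *\<^sub>R ?R (K2 n j))"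
          by (rule restr_comb) (simp add: updN[OF n])
        show "?R (v (Suc n)) = ?R (v n) + \<tau> *\<^sub>R (\<Sum>j\<in>?S. bw j *\<^sub>R ?R (K3 n j))"
          by (rule restr_comb) (simp add: updV[OF n])
        show "?R (q (Suc n)) = ?R (q n) + \<tau> *\<^sub>R (\<Sum>j\<in>?S. bw j *\<^sub>R ?R (K4 n j))"
          by (rule restr_comb) (simp add: updQ[OF n])
      qed
    qed
    also have "(\<Sum>i\<in>?S. bw i * ?B (Y i) (k i)) = 0"
    proof (intro sum.neutral ballI)
      fix i assume i: "i \<in> ?S"
      have "?B (Y i) (k i) = ?B (Es n i, Ns n i, Vs n i, Qs i) (K1 n i, K2 n i, K3 n i, K4 n i)"
        unfolding Y_def k_def by (rule BB_restr)
      also have "\<dots> = 0"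
      proof (rule BB_stage)
        show "K1 n i p = \<i> * (?L (Es n i) p - of_real (\<epsilon>^2) * ?L (?L (Es n i)) p
              - of_real (Ns n i p) * Es n i p)" if "p \<in> ?G" for p
          by (rule stK1[OF n i that])
        show "K2 n i p = ?L (Vs n i) p" if "p \<in> ?G" for p by (rule stK2[OF n i that])
        show "K3 n i p = Ns n i p - \<epsilon>^2 * ?L (Ns n i) p + Qs i p" if "p \<in> ?G" for p
          using stK3[OF n i that] by (simp add: Qs_def)
        show "K4 n i p = 2 * Re (cnj (Es n i p) * K1 n i p)" if "p \<in> ?G" for p
          by (rule stK4[OF n i that])
      qed
      finally show "bw i * ?B (Y i) (k i) = 0" by simp
    qed
    finally have eq: "?B y' y' = ?B y y" by simp
    have h1: "Ham a b c d Nx Ny \<epsilon> (E (Suc n)) (N (Suc n)) (v (Suc n))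
        = complex_of_real (((b - a) / real Nx) * ((d - c) / real Ny) * ?B y' y')"
      unfolding y'_def BB_restr by (rule Ham_BB) (use qinv[of "Suc n"] n in auto)
    have h2: "Ham a b c d Nx Ny \<epsilon> (E n) (N n) (v n)
        = complex_of_real (((b - a) / real Nx) * ((d - c) / real Ny) * ?B y y)"
      unfolding y_def BB_restr by (rule Ham_BB) (use qinv[of n] n in auto)
    show ?thesis unfolding h1 h2 eq ..
  qed
  show ?thesis
  proof (intro allI impI conjI)
    fix n assume n: "n \<le> J"
    show "ip a b c d Nx Ny (E (Suc n)) (E (Suc n)) = ip a b c d Nx Ny (E n) (E n)" by (rule mass[OF n])
    show "\<forall>p\<in>?G. q n p - (cmod (E n p))^2 = 0" using qinv[of n] n by simp
    show "Ham a b c d Nx Ny \<epsilon> (E (Suc n)) (N (Suc n)) (v (Suc n)) = Ham a b c d Nx Ny \<epsilon> (E n) (N n) (v n)"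
      by (rule energy[OF n])
  qed
qed

end
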